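(* Let $\mu\ge\lambda$ and let $\eta'\in\{-1,0,1\}^{\mathbb Z}$ be any configuration with $\eta'(0)=1$ and $\eta'(x)=-1$ for all $x\ge1$. Let $\zeta_t^O$ and $\zeta_t^{\eta'}$ be the nearest neighbours three state contact processes with parameters $(\lambda,\mu)$ started respectively from the standard initial configuration and from $\eta'$, coupled by the graphical construction. Let $I_t=\{x:\zeta_t^O(x)=1\}$, $r_t=\sup I_t$ and $r_t'=\sup\{x:\zeta_t^{\eta'}(x)=1\}$. Then for all $t\ge0$, $r_t=r_t'$ on the event $\{I_t\neq\emptyset\}$.
   Context: The nearest neighbours three state contact process with parameters $(\lambda,\mu)$ has state space $\{-1,0,1\}^{\mathbb Z}$; each site $x$ makes transitions $-1\to1$ at rate $\lambda n_t(x)$, $0\to1$ at rate $\mu n_t(x)$, $1\to0$ at rate 1, where $n_t(x)$ is the number of $y\in\{x-1,x+1\}$ in state 1. The standard initial configuration has the origin in state 1 and all other sites in state $-1$. Graphical construction (for $\mu\ge\lambda$): for each $x\in\mathbb Z$ and $y\in\{x-1,x+1\}$ take independent Poisson processes of rate $\lambda$ (times of $\lambda$-arrows from $x$ to $y$) and rate $\mu-\lambda$ (times of $(\mu-\lambda)$-arrows from $x$ to $y$), and for each $x$ an independent rate-1 Poisson process (recovery marks at $x$). Given a starting configuration $\eta$, the process is defined from these: at the time of a $\lambda$-arrow from $x$ to $y$, if just before $x$ is in state 1 and $y$ in state $0$ or $-1$, then $y$ becomes 1; at the time of a $(\mu-\lambda)$-arrow from $x$ to $y$, if just before $x$ is in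 state 1 and $y$ in state 0, then $y$ becomes 1; at a recovery mark at $x$, if $x$ is in state 1 it becomes 0. Processes built from the same realization of these Poisson processes are said to be coupled by the graphical construction. *)

theory Defs
  imports Complex_Main "HOL-Library.Extended_Real"
begin

text \<open>A realization of the Poisson processes of the graphical construction.
  lam x y : times of lambda-arrows from x to y (only used for |x - y| = 1),
  dif x y : times of (mu - lambda)-arrows from x to y (only used for |x - y| = 1),
  rec x   : times of recovery marks at x.\<close>
record graph =
  lam :: "int \<Rightarrow> int \<Rightarrow> real set"
  dif :: "int \<Rightarrow> int \<Rightarrow> real set"
  rec :: "int \<Rightarrow> real set"

datatype mark = Rec int | Lam int int | Dif int int

definition mark_times :: "graph \<Rightarrow> mark \<Rightarrow> real set" where
  "mark_times G m = (case m of
      Rec x \<Rightarrow> rec G x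
    | Lam x y \<Rightarrow> (if \<bar>x - y\<bar> = 1 then lam G x y else {})
    | Dif x y \<Rightarrow> (if \<bar>x - y\<bar> = 1 then dif G x y else {}))"

definition edge_blocked :: "graph \<Rightarrow> real \<Rightarrow> int \<Rightarrow> bool" where
  "edge_blocked G T x \<longleftrightarrow>
     (lam G x (x+1) \<union> lam G (x+1) x \<union> dif G x (x+1) \<union> dif G (x+1) x) \<inter> {0..T} = {}"

text \<open>Almost-sure properties of a realization of the independent Poisson processes:
  all marks occur at positive times, each process has only finitely many marks in
  bounded time intervals, no two marks occur simultaneously, and for every time
  horizon T there are arbitrarily far edges on both sides not crossed by any arrow
  before T (this is what makes the graphical construction on Z well defined).\<close>
definition good_graph :: "graph \<Rightarrow> bool" where
  "good_graph G \<longleftrightarrow>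
     (\<forall>m. mark_times G m \<subseteq> {0<..}) \<and>
     (\<forall>m T. finite (mark_times G m \<inter> {..T})) \<and>
     (\<forall>m1 m2 t. t \<in> mark_times G m1 \<and> t \<in> mark_times G m2 \<longrightarrow> m1 = m2) \<and>
     (\<forall>T n. \<exists>x. x \<ge> n \<and> edge_blocked G T x) \<and>
     (\<forall>T n. \<exists>x. x \<le> n \<and> edge_blocked G T x)"

text \<open>Consistency of the realization with the rates: no lambda-arrows if lambda = 0,
  no (mu - lambda)-arrows if mu = lambda (Poisson processes of rate 0 are empty).\<close>
definition rates_ok :: "real \<Rightarrow> real \<Rightarrow> graph \<Rightarrow> bool" where
  "rates_ok la mu G \<longleftrightarrow>
     0 \<le> la \<and> la \<le> mu \<and>
     (la = 0 \<longrightarrow> (\<forall>x y. lam G x y = {})) \<and>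
     (mu = la \<longrightarrow> (\<forall>x y. dif G x y = {}))"

definition upd :: "graph \<Rightarrow> real \<Rightarrow> int \<Rightarrow> (int \<Rightarrow> int) \<Rightarrow> int" where
  "upd G t x xi =
     (if t \<in> rec G x \<and> xi x = 1 then 0
      else if (\<exists>y\<in>{x-1, x+1}. t \<in> lam G y x \<and> xi y = 1 \<and> xi x \<in> {0, -1}) then 1
      else if (\<exists>y\<in>{x-1, x+1}. t \<in> dif G y x \<and> xi y = 1 \<and> xi x = 0) then 1
      else xi x)"

definition config :: "(int \<Rightarrow> int) \<Rightarrow> bool" where
  "config \<eta> \<longleftrightarrow> (\<forall>x. \<eta> x \<in> {-1, 0, 1})"

text \<open>zeta (as a function of time t >= 0) is the three state contact process built from
  the realization G with initial configuration eta: each site is right-continuous and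
  piecewise constant, and at every time t > 0 the state of x is obtained from the states
  just before t by the rules of the graphical construction (so it only changes at marks).\<close>
definition tscp_path :: "graph \<Rightarrow> (int \<Rightarrow> int) \<Rightarrow> (real \<Rightarrow> int \<Rightarrow> int) \<Rightarrow> bool" where
  "tscp_path G \<eta> \<zeta> \<longleftrightarrow>
     (\<forall>x. \<zeta> 0 x = \<eta> x) \<and>
     (\<forall>t\<ge>0. config (\<zeta> t)) \<and>
     (\<forall>x. \<forall>t\<ge>0. \<exists>\<epsilon>>0. \<forall>u. t \<le> u \<and> u < t + \<epsilon> \<longrightarrow> \<zeta> u x = \<zeta> t x) \<and>
     (\<forall>x. \<forall>t>0. \<exists>\<epsilon>>0. \<epsilon> \<le> t \<and>
        (\<forall>y\<in>{x-1, x, x+1}. \<forall>u. t - \<epsilon> < u \<and> u < t \<longrightarrow> \<zeta> u y = \<zeta> (t - \<epsilon>/2) y) \<and>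
        \<zeta> t x = upd G t x (\<zeta> (t - \<epsilon>/2)))"

definition std_init :: "int \<Rightarrow> int" where
  "std_init x = (if x = 0 then 1 else -1)"

definition infected :: "(int \<Rightarrow> int) \<Rightarrow> int set" where
  "infected \<xi> = {x. \<xi> x = 1}"

text \<open>Supremum in the extended reals (sup of the empty set is -infinity).\<close>
definition rsup :: "int set \<Rightarrow> ereal" where
  "rsup S = (SUP x\<in>S. ereal (real_of_int x))"

end

theory Submission imports Defs begin

lemma upd_cong3: assumes "\<forall>y\<in>{x-1,x,x+1}. \<xi>1 y = \<xi>2 y"
  shows "upd G u x \<xi>1 = upd G u x \<xi>2"
  using assms unfolding upd_def by simp

lemma upd_nm1: "\<xi> x \<noteq> -1 \<Longrightarrow> upd G u x \<xi> \<noteq> -1"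
  unfolding upd_def by auto

lemma upd_one_cases: "upd G u x \<xi> = 1 \<Longrightarrow> \<xi> x \<noteq> 1 \<Longrightarrow>
   \<exists>y\<in>{x-1,x+1}. (u \<in> lam G y x \<or> u \<in> dif G y x) \<and> \<xi> y = 1"
  unfolding upd_def by (auto split: if_splits)

lemma upd_eq1: "\<xi> x = 1 \<Longrightarrow> upd G u x \<xi> = (if u \<in> rec G x then 0 else 1)"
  unfolding upd_def by auto

lemma upd_m1: "\<xi> x = -1 \<Longrightarrow> upd G u x \<xi> \<noteq> -1 \<Longrightarrow> upd G u x \<xi> = 1"
  unfolding upd_def by (auto split: if_splits)

lemma no_simul: assumes "good_graph G" "y \<in> {x-1,x+1}" "u \<in> lam G y x \<or> u \<in> dif G y x"
  shows "u \<notin> rec G x"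
proof
  assume r: "u \<in> rec G x"
  have d: "\<bar>y - x\<bar> = 1" using assms(2) by auto
  have 3: "\<forall>m1 m2 t. t \<in> mark_times G m1 \<and> t \<in> mark_times G m2 \<longrightarrow> m1 = m2"
    using assms(1) unfolding good_graph_def by blast
  show False
  proof (cases "u \<in> lam G y x")
    case True
    then have "u \<in> mark_times G (Lam y x)" "u \<in> mark_times G (Rec x)"
      using d r by (auto simp: mark_times_def)
    then show False using 3 by blast
  next
    case False
    then have "u \<in> mark_times G (Dif y x)" "u \<in> mark_times G (Rec x)"
      using assms(3) d r by (auto simp: mark_times_def)
    then show False using 3 by blast
  qed
qed


lemma upd_cong: assumes "\<xi>1 x = \<xi>2 x"
  and "\<forall>y\<in>{x-1,x+1}. (u \<in> lam G y x \<or> u \<in> dif G y x) \<longrightarrow> \<xi>1 y = \<xi>2 y"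
  shows "upd G u x \<xi>1 = upd G u x \<xi>2"
proof -
  have e2: "(\<exists>y\<in>{x-1, x+1}. u \<in> lam G y x \<and> \<xi>1 y = 1 \<and> \<xi>1 x \<in> {0, -1}) =
            (\<exists>y\<in>{x-1, x+1}. u \<in> lam G y x \<and> \<xi>2 y = 1 \<and> \<xi>2 x \<in> {0, -1})"
    unfolding assms(1) by (rule bex_cong[OF refl]) (use assms(2) in auto)
  have e3: "(\<exists>y\<in>{x-1, x+1}. u \<in> dif G y x \<and> \<xi>1 y = 1 \<and> \<xi>1 x = 0) =
            (\<exists>y\<in>{x-1, x+1}. u \<in> dif G y x \<and> \<xi>2 y = 1 \<and> \<xi>2 x = 0)"
    unfolding assms(1) by (rule bex_cong[OF refl]) (use assms(2) in auto)
  show ?thesis unfolding upd_def by (simp only: e2 e3) (simp only: assms(1))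
qed

lemma upd_c1: "u \<in> rec G x \<and> \<xi> x = 1 \<Longrightarrow> upd G u x \<xi> = 0"
  unfolding upd_def by (rule if_P)
lemma upd_c2: "\<not> (u \<in> rec G x \<and> \<xi> x = 1) \<Longrightarrow> (\<exists>y\<in>{x-1, x+1}. u \<in> lam G y x \<and> \<xi> y = 1 \<and> \<xi> x \<in> {0, -1})
  \<Longrightarrow> upd G u x \<xi> = 1"
  unfolding upd_def by (simp only: if_True if_False)
lemma upd_c3: "\<not> (u \<in> rec G x \<and> \<xi> x = 1) \<Longrightarrow> \<not> (\<exists>y\<in>{x-1, x+1}. u \<in> lam G y x \<and> \<xi> y = 1 \<and> \<xi> x \<in> {0, -1})
  \<Longrightarrow> (\<exists>y\<in>{x-1, x+1}. u \<in> dif G y x \<and> \<xi> y = 1 \<and> \<xi> x = 0) \<Longrightarrow> upd G u x \<xi> = 1"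
  unfolding upd_def by (simp only: if_True if_False)
lemma upd_c4: "\<not> (u \<in> rec G x \<and> \<xi> x = 1) \<Longrightarrow> \<not> (\<exists>y\<in>{x-1, x+1}. u \<in> lam G y x \<and> \<xi> y = 1 \<and> \<xi> x \<in> {0, -1})
  \<Longrightarrow> \<not> (\<exists>y\<in>{x-1, x+1}. u \<in> dif G y x \<and> \<xi> y = 1 \<and> \<xi> x = 0) \<Longrightarrow> upd G u x \<xi> = \<xi> x"
  unfolding upd_def by (simp only: if_True if_False)

lemma key: assumes h1: "upd G u x \<xi> = 1" and h2: "\<xi> x \<noteq> 1"
  and h3: "\<forall>y\<in>{x-1,x+1}. (u \<in> lam G y x \<or> u \<in> dif G y x) \<and> \<xi> y = 1 \<longrightarrow> \<xi>' y = 1"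
  and h4: "\<xi> x \<noteq> -1 \<longrightarrow> \<xi>' x \<noteq> -1" and h5: "\<xi>' x \<in> {-1,0,1}"
  and h6: "\<forall>y\<in>{x-1,x+1}. (u \<in> lam G y x \<or> u \<in> dif G y x) \<longrightarrow> u \<notin> rec G x"
  shows "upd G u x \<xi>' = 1"
proof -
  have nc1: "\<not> (u \<in> rec G x \<and> \<xi> x = 1)" using h2 by blast
  obtain y where y: "y \<in> {x-1,x+1}" "\<xi> y = 1"
    and c: "(u \<in> lam G y x \<and> \<xi> x \<in> {0, -1}) \<or> (u \<in> dif G y x \<and> \<xi> x = 0)"
  proof (cases "\<exists>y\<in>{x-1, x+1}. u \<in> lam G y x \<and> \<xi> y = 1 \<and> \<xi> x \<in> {0, -1}")
    case True then show ?thesis using that by blast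
  next
    case F2: False
    show ?thesis
    proof (cases "\<exists>y\<in>{x-1, x+1}. u \<in> dif G y x \<and> \<xi> y = 1 \<and> \<xi> x = 0")
      case True then show ?thesis using that by blast
    next
      case False
      have "upd G u x \<xi> = \<xi> x" using upd_c4[where \<xi>="\<xi>" and x=x and u=u and G=G, OF nc1 F2 False] .
      then show ?thesis using h1 h2 by simp
    qed
  qed
  have y': "\<xi>' y = 1" using h3 y c by blast
  have nr: "u \<notin> rec G x" using h6 y c by blast
  have nc1': "\<not> (u \<in> rec G x \<and> \<xi>' x = 1)" using nr by blast
  consider "\<xi>' x = -1" | "\<xi>' x = 0" | "\<xi>' x = 1" using h5 by blast
  then show ?thesis
  proof cases
    case 1
    then have "u \<in> lam G y x" using c h4 by auto
    then have "\<exists>y\<in>{x-1, x+1}. u \<in> lam G y x \<and> \<xi>' y = 1 \<and> \<xi>' x \<in> {0, -1}"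
      using y(1) y' 1 by blast
    then show ?thesis using upd_c2[where \<xi>="\<xi>'" and x=x and u=u and G=G, OF nc1'] by blast
  next
    case 2
    show ?thesis
    proof (cases "u \<in> lam G y x")
      case True
      then have "\<exists>y\<in>{x-1, x+1}. u \<in> lam G y x \<and> \<xi>' y = 1 \<and> \<xi>' x \<in> {0, -1}"
        using y(1) y' 2 by blast
      then show ?thesis using upd_c2[where \<xi>="\<xi>'" and x=x and u=u and G=G, OF nc1'] by blast
    next
      case False
      then have "u \<in> dif G y x" using c by blast
      then have D: "\<exists>y\<in>{x-1, x+1}. u \<in> dif G y x \<and> \<xi>' y = 1 \<and> \<xi>' x = 0"
        using y(1) y' 2 by blast
      show ?thesis
      proof (cases "\<exists>y\<in>{x-1, x+1}. u \<in> lam G y x \<and> \<xi>' y = 1 \<and> \<xi>' x \<in> {0, -1}")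
        case True then show ?thesis using upd_c2[where \<xi>="\<xi>'" and x=x and u=u and G=G, OF nc1'] by blast
      next
        case False then show ?thesis using upd_c3[where \<xi>="\<xi>'" and x=x and u=u and G=G, OF nc1' False D] by blast
      qed
    qed
  next
    case 3
    have n2: "\<not> (\<exists>y\<in>{x-1, x+1}. u \<in> lam G y x \<and> \<xi>' y = 1 \<and> \<xi>' x \<in> {0, -1})" using 3 by simp
    have n3: "\<not> (\<exists>y\<in>{x-1, x+1}. u \<in> dif G y x \<and> \<xi>' y = 1 \<and> \<xi>' x = 0)" using 3 by simp
    show ?thesis using upd_c4[where \<xi>="\<xi>'" and x=x and u=u and G=G, OF nc1' n2 n3] 3 by simp
  qed
qed

lemma blocked: "edge_blocked G T a \<Longrightarrow> 0 \<le> u \<Longrightarrow> u \<le> T \<Longrightarrow>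
  u \<notin> lam G a (a+1) \<and> u \<notin> lam G (a+1) a \<and> u \<notin> dif G a (a+1) \<and> u \<notin> dif G (a+1) a"
  unfolding edge_blocked_def by auto

lemma nbr: assumes "edge_blocked G T a" "edge_blocked G T b" "0 \<le> u" "u \<le> T"
  "x \<in> {a<..b}" "y \<in> {x-1,x+1}" "u \<in> lam G y x \<or> u \<in> dif G y x"
  shows "y \<in> {a<..b}"
proof (rule ccontr)
  assume "y \<notin> {a<..b}"
  then have "(y = a \<and> x = a+1) \<or> (y = b+1 \<and> x = b)" using assms(5,6) by auto
  then show False using blocked[OF assms(1,3,4)] blocked[OF assms(2,3,4)] assms(7) by auto
qed

definition AB :: "int set \<Rightarrow> (int\<Rightarrow>int) \<Rightarrow> (int\<Rightarrow>int) \<Rightarrow> bool" where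
 "AB W \<xi> \<xi>' \<longleftrightarrow> (\<forall>x\<in>W. (\<exists>y\<in>W. y \<le> x \<and> \<xi> y = 1) \<longrightarrow> \<xi> x = \<xi>' x) \<and>
     (\<forall>x\<in>W. \<xi> x \<noteq> -1 \<longrightarrow> \<xi>' x \<noteq> -1)"

lemma AB_step:
  assumes gg: "good_graph G" and ba: "edge_blocked G T a" and bb: "edge_blocked G T b"
    and u: "0 \<le> u" "u \<le> T" and ab: "AB {a<..b} \<xi> \<xi>'" and cf: "config \<xi>'"
  shows "AB {a<..b} (\<lambda>x. upd G u x \<xi>) (\<lambda>x. upd G u x \<xi>')"
proof -
  let ?W = "{a<..b}"
  have A: "\<And>x y. x \<in> ?W \<Longrightarrow> y \<in> ?W \<Longrightarrow> y \<le> x \<Longrightarrow> \<xi> y = 1 \<Longrightarrow> \<xi> x = \<xi>' x"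
    using ab unfolding AB_def by blast
  have B: "\<And>x. x \<in> ?W \<Longrightarrow> \<xi> x \<noteq> -1 \<Longrightarrow> \<xi>' x \<noteq> -1"
    using ab unfolding AB_def by blast
  have N: "\<And>x y. x \<in> ?W \<Longrightarrow> y \<in> {x-1,x+1} \<Longrightarrow> u \<in> lam G y x \<or> u \<in> dif G y x \<Longrightarrow> y \<in> ?W"
    by (rule nbr[OF ba bb u])
  have K: "upd G u x \<xi>' = 1" if x: "x \<in> ?W" and h: "upd G u x \<xi> = 1" "\<xi> x \<noteq> 1" for x
  proof (rule key[OF h])
    show "\<forall>y\<in>{x-1,x+1}. (u \<in> lam G y x \<or> u \<in> dif G y x) \<and> \<xi> y = 1 \<longrightarrow> \<xi>' y = 1"
    proof (intro ballI impI)
      fix y assume "y \<in> {x-1,x+1}" "(u \<in> lam G y x \<or> u \<in> dif G y x) \<and> \<xi> y = 1"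
      then have "y \<in> ?W" "\<xi> y = 1" using N[OF x] by blast+
      then show "\<xi>' y = 1" using A[of y y] by simp
    qed
    show "\<xi> x \<noteq> -1 \<longrightarrow> \<xi>' x \<noteq> -1" using B x by blast
    show "\<xi>' x \<in> {-1,0,1}" using cf unfolding config_def by blast
    show "\<forall>y\<in>{x-1,x+1}. (u \<in> lam G y x \<or> u \<in> dif G y x) \<longrightarrow> u \<notin> rec G x"
    proof (intro ballI impI)
      fix y assume "y \<in> {x-1,x+1}" "u \<in> lam G y x \<or> u \<in> dif G y x"
      then show "u \<notin> rec G x" by (rule no_simul[OF gg])
    qed
  qed
  have A': "upd G u x \<xi> = upd G u x \<xi>'"
    if x: "x \<in> ?W" and y: "y \<in> ?W" "y \<le> x" "upd G u y \<xi> = 1" for x y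
  proof (cases "\<exists>z\<in>?W. z \<le> x - 1 \<and> \<xi> z = 1")
    case True
    then obtain z where z: "z \<in> ?W" "z \<le> x - 1" "\<xi> z = 1" by blast
    show ?thesis
    proof (rule upd_cong)
      show "\<xi> x = \<xi>' x" using A[OF x z(1)] z by simp
      show "\<forall>y\<in>{x-1,x+1}. (u \<in> lam G y x \<or> u \<in> dif G y x) \<longrightarrow> \<xi> y = \<xi>' y"
      proof (intro ballI impI)
        fix y' assume "y' \<in> {x-1,x+1}" "u \<in> lam G y' x \<or> u \<in> dif G y' x"
        then have y'W: "y' \<in> ?W" "z \<le> y'" using N[OF x] z by auto
        show "\<xi> y' = \<xi>' y'" by (rule A[OF y'W(1) z(1) y'W(2) z(3)])
      qed
    qed
  next
    case False
    show ?thesis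
    proof (cases "\<xi> x = 1")
      case True
      then have "\<xi>' x = 1" using A[OF x x] by simp
      then show ?thesis using True by (simp add: upd_eq1)
    next
      case nx: False
      have none: "\<And>z. z \<in> ?W \<Longrightarrow> z \<le> x \<Longrightarrow> \<xi> z \<noteq> 1"
      proof -
        fix z assume z: "z \<in> ?W" "z \<le> x"
        show "\<xi> z \<noteq> 1"
        proof (cases "z = x")
          case True then show ?thesis using nx by simp
        next
          case False then have "z \<le> x - 1" using z by simp
          then show ?thesis using \<open>\<not> (\<exists>z\<in>?W. z \<le> x - 1 \<and> \<xi> z = 1)\<close> z by blast
        qed
      qed
      have "\<xi> y \<noteq> 1" by (rule none[OF y(1) y(2)])
      then obtain y' where y': "y' \<in> {y-1,y+1}" "u \<in> lam G y' y \<or> u \<in> dif G y' y" "\<xi> y' = 1"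
        using upd_one_cases[OF y(3)] by blast
      have y'W: "y' \<in> ?W" using N[OF y(1) y'(1,2)] .
      have "y' > x"
      proof (rule ccontr)
        assume "\<not> y' > x"
        then have le: "y' \<le> x" by simp
        show False using none[OF y'W le] y'(3) by simp
      qed
      then have "y = x" using y' y by auto
      then have "upd G u x \<xi> = 1" using y by simp
      moreover have "upd G u x \<xi>' = 1" by (rule K[OF x calculation nx])
      ultimately show ?thesis by simp
    qed
  qed
  have B': "upd G u x \<xi>' \<noteq> -1" if x: "x \<in> ?W" and h: "upd G u x \<xi> \<noteq> -1" for x
  proof (cases "\<xi> x = -1")
    case True
    then have "upd G u x \<xi> = 1" by (rule upd_m1[OF _ h])
    then show ?thesis using K[OF x] True by simp
  next
    case False
    then show ?thesis by (rule upd_nm1[where \<xi>="\<xi>'" and x=x, OF B[OF x]])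
  qed
  show ?thesis unfolding AB_def
  proof (intro conjI ballI impI)
    fix x assume x: "x \<in> ?W" and "\<exists>y\<in>?W. y \<le> x \<and> upd G u y \<xi> = 1"
    then obtain y where "y \<in> ?W" "y \<le> x" "upd G u y \<xi> = 1" by blast
    then show "upd G u x \<xi> = upd G u x \<xi>'" by (rule A'[OF x])
  next
    fix x assume "x \<in> ?W" "upd G u x \<xi> \<noteq> -1"
    then show "upd G u x \<xi>' \<noteq> -1" by (rule B')
  qed
qed

lemma allm1_step:
  fixes \<xi> :: "int \<Rightarrow> int"
  assumes ba: "edge_blocked G T a" and bb: "edge_blocked G T b"
    and u: "0 \<le> u" "u \<le> T" and h: "\<forall>z\<in>{a<..b}. \<xi> z = -1"
  shows "\<forall>z\<in>{a<..b}. upd G u z \<xi> = -1"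
proof (rule ccontr)
  assume "\<not> ?thesis"
  then obtain z where z: "z \<in> {a<..b}" "upd G u z \<xi> \<noteq> -1" by blast
  have hz: "\<xi> z = -1" using h z(1) by blast
  have u1: "upd G u z \<xi> = 1" by (rule upd_m1[OF hz z(2)])
  have "\<xi> z \<noteq> 1" using hz by simp
  then obtain y where y: "y \<in> {z-1,z+1}" "u \<in> lam G y z \<or> u \<in> dif G y z" "\<xi> y = 1"
    using upd_one_cases[OF u1] by blast
  have "y \<in> {a<..b}" using nbr[OF ba bb u z(1) y(1,2)] .
  then have "\<xi> y = -1" using h by blast
  then show False using y(3) by simp
qed

lemma tp2: "tscp_path G \<eta> \<zeta> \<Longrightarrow> \<forall>t\<ge>0. config (\<zeta> t)"
  unfolding tscp_path_def by (elim conjE) assumption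
lemma tp3: "tscp_path G \<eta> \<zeta> \<Longrightarrow> \<forall>x. \<forall>t\<ge>0. \<exists>\<epsilon>>0. \<forall>u. t \<le> u \<and> u < t + \<epsilon> \<longrightarrow> \<zeta> u x = \<zeta> t x"
  unfolding tscp_path_def by (elim conjE) assumption
lemma tp4: "tscp_path G \<eta> \<zeta> \<Longrightarrow> \<forall>x. \<forall>t>0. \<exists>\<epsilon>>0. \<epsilon> \<le> t \<and>
        (\<forall>y\<in>{x-1, x, x+1}. \<forall>u. t - \<epsilon> < u \<and> u < t \<longrightarrow> \<zeta> u y = \<zeta> (t - \<epsilon>/2) y) \<and>
        \<zeta> t x = upd G t x (\<zeta> (t - \<epsilon>/2))"
  unfolding tscp_path_def by (elim conjE) assumption
lemma tp1: "tscp_path G \<eta> \<zeta> \<Longrightarrow> \<zeta> 0 = \<eta>"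
  unfolding tscp_path_def by (elim conjE) (rule ext, blast)

lemma right_ev: assumes "tscp_path G \<eta> \<zeta>" "0 \<le> m"
  shows "eventually (\<lambda>u. \<zeta> u x = \<zeta> m x) (at_right m)"
proof -
  obtain e where e: "e > 0" "\<forall>u. m \<le> u \<and> u < m + e \<longrightarrow> \<zeta> u x = \<zeta> m x"
    using tp3[OF assms(1), rule_format, OF assms(2), of x] by (elim exE conjE) (rule that)
  show ?thesis unfolding eventually_at_right_field
  proof (intro exI[of _ "m+e"] conjI allI impI)
    show "m < m + e" using e(1) by simp
    fix y assume "m < y" "y < m + e"
    then have "m \<le> y \<and> y < m + e" by simp
    then show "\<zeta> y x = \<zeta> m x" using e(2) by blast
  qed
qed

lemma left_ev: assumes "tscp_path G \<eta> \<zeta>" "0 < m"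
  shows "eventually (\<lambda>v. 0 \<le> v \<and> \<zeta> m x = upd G m x (\<zeta> v)) (at_left m)"
proof -
  obtain e where e: "e > 0" "e \<le> m"
    "\<forall>y\<in>{x-1, x, x+1}. \<forall>u. m - e < u \<and> u < m \<longrightarrow> \<zeta> u y = \<zeta> (m - e/2) y"
    "\<zeta> m x = upd G m x (\<zeta> (m - e/2))"
    using tp4[OF assms(1), rule_format, OF assms(2), of x] by (elim exE conjE) (rule that)
  show ?thesis unfolding eventually_at_left_field
  proof (rule exI[of _ "m-e"], intro conjI allI impI)
    show "m - e < m" using e by simp
    fix v assume v: "m - e < v" "v < m"
    show "0 \<le> v" using v e by simp
    have "upd G m x (\<zeta> v) = upd G m x (\<zeta> (m - e/2))"
    proof (rule upd_cong3, intro ballI)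
      fix y assume "y \<in> {x-1,x,x+1}"
      then show "\<zeta> v y = \<zeta> (m - e/2) y" using e(3) v by blast
    qed
    then show "\<zeta> m x = upd G m x (\<zeta> v)" using e(4) by simp
  qed
qed

lemma window_induct:
  fixes \<zeta> \<zeta>2 :: "real \<Rightarrow> int \<Rightarrow> int"
  assumes P1: "tscp_path G \<eta> \<zeta>" and P2: "tscp_path G \<eta>2 \<zeta>2"
    and fin: "finite W"
    and cong: "\<And>\<xi>1 \<xi>2 \<xi>1' \<xi>2'. (\<forall>x\<in>W. \<xi>1 x = \<xi>2 x \<and> \<xi>1' x = \<xi>2' x) \<Longrightarrow> Q \<xi>1 \<xi>1' \<Longrightarrow> Q \<xi>2 \<xi>2'"
    and init: "Q (\<zeta> 0) (\<zeta>2 0)"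
    and step: "\<And>u \<xi> \<xi>'. 0 < u \<Longrightarrow> u \<le> T \<Longrightarrow> Q \<xi> \<xi>' \<Longrightarrow> config \<xi> \<Longrightarrow> config \<xi>' \<Longrightarrow>
        Q (\<lambda>x. upd G u x \<xi>) (\<lambda>x. upd G u x \<xi>')"
    and s: "0 \<le> s" "s \<le> T"
  shows "Q (\<zeta> s) (\<zeta>2 s)"
proof (rule ccontr)
  assume ns: "\<not> Q (\<zeta> s) (\<zeta>2 s)"
  define F where "F = {u. 0 \<le> u \<and> u \<le> T \<and> \<not> Q (\<zeta> u) (\<zeta>2 u)}"
  have sF: "s \<in> F" using ns s unfolding F_def by simp
  have bdd: "bdd_below F" unfolding F_def by (rule bdd_belowI[of _ 0]) auto
  define m where "m = Inf F"
  have m0: "0 \<le> m" unfolding m_def using sF by (intro cInf_greatest) (auto simp: F_def)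
  have mT: "m \<le> T" unfolding m_def using cInf_lower[OF sF bdd] s by simp
  have below: "Q (\<zeta> u) (\<zeta>2 u)" if "0 \<le> u" "u < m" for u
  proof (rule ccontr)
    assume "\<not> Q (\<zeta> u) (\<zeta>2 u)"
    then have "u \<in> F" using that mT unfolding F_def by simp
    then have "m \<le> u" unfolding m_def using cInf_lower bdd by blast
    then show False using that by simp
  qed
  have Qm: "Q (\<zeta> m) (\<zeta>2 m)"
  proof (cases "m = 0")
    case True then show ?thesis using init by simp
  next
    case False
    then have mp: "0 < m" using m0 by simp
    have "eventually (\<lambda>v. \<forall>x\<in>W. (0 \<le> v \<and> \<zeta> m x = upd G m x (\<zeta> v)) \<and>
                 (0 \<le> v \<and> \<zeta>2 m x = upd G m x (\<zeta>2 v))) (at_left m)"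
      by (rule eventually_ball_finite[OF fin], intro ballI eventually_conj left_ev[OF P1 mp] left_ev[OF P2 mp])
    then obtain b where b: "b < m" "\<forall>v>b. v < m \<longrightarrow> (\<forall>x\<in>W. (0 \<le> v \<and> \<zeta> m x = upd G m x (\<zeta> v)) \<and>
                 (0 \<le> v \<and> \<zeta>2 m x = upd G m x (\<zeta>2 v)))"
      unfolding eventually_at_left_field by blast
    define v where "v = max ((b + m) / 2) (m / 2)"
    have "b < (b + m) / 2" "(b + m) / 2 < m" "m / 2 < m" "0 \<le> m / 2" using b(1) mp by auto
    then have v: "b < v" "v < m" "0 \<le> v" unfolding v_def by (auto simp: less_max_iff_disj max_less_iff_conj)
    have hv: "\<forall>x\<in>W. (0 \<le> v \<and> \<zeta> m x = upd G m x (\<zeta> v)) \<and> (0 \<le> v \<and> \<zeta>2 m x = upd G m x (\<zeta>2 v))"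
      using b(2) v by blast
    have v0: "0 \<le> v" using v by simp
    have "Q (\<zeta> v) (\<zeta>2 v)" by (rule below[OF v0 v(2)])
    moreover have "config (\<zeta> v)" "config (\<zeta>2 v)" using tp2[OF P1] tp2[OF P2] v0 by blast+
    ultimately have "Q (\<lambda>x. upd G m x (\<zeta> v)) (\<lambda>x. upd G m x (\<zeta>2 v))"
      using step[OF mp mT] by blast
    then show ?thesis by (rule cong[rotated]) (use hv in auto)
  qed
  have "eventually (\<lambda>u. \<forall>x\<in>W. \<zeta> u x = \<zeta> m x \<and> \<zeta>2 u x = \<zeta>2 m x) (at_right m)"
    by (rule eventually_ball_finite[OF fin], intro ballI eventually_conj right_ev[OF P1 m0] right_ev[OF P2 m0])
  then obtain c where c: "c > m" "\<forall>u>m. u < c \<longrightarrow> (\<forall>x\<in>W. \<zeta> u x = \<zeta> m x \<and> \<zeta>2 u x = \<zeta>2 m x)"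
    unfolding eventually_at_right_field by blast
  have "c \<le> m" unfolding m_def
  proof (rule cInf_greatest)
    show "F \<noteq> {}" using sF by blast
    fix u assume u: "u \<in> F"
    have "m \<le> u" unfolding m_def using cInf_lower[OF u bdd] .
    show "c \<le> u"
    proof (rule ccontr)
      assume "\<not> c \<le> u"
      then have "u < c" by simp
      show False
      proof (cases "u = m")
        case True then show False using u Qm unfolding F_def by simp
      next
        case False
        then have "m < u" using \<open>m \<le> u\<close> by simp
        then have "\<forall>x\<in>W. \<zeta> u x = \<zeta> m x \<and> \<zeta>2 u x = \<zeta>2 m x" using c(2) \<open>u < c\<close> by blast
        then have "Q (\<zeta> u) (\<zeta>2 u)" by (intro cong[OF _ Qm]) simp
        then show False using u unfolding F_def by simp
      qed
    qed
  qed
  then show False using c by simp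
qed


lemma AB_cong:
  assumes e: "\<forall>x\<in>W. \<xi>1 x = \<xi>2 x \<and> \<xi>1' x = \<xi>2' x" and h: "AB W \<xi>1 \<xi>1'"
  shows "AB W \<xi>2 \<xi>2'"
  unfolding AB_def
proof (intro conjI ballI impI)
  fix x assume x: "x \<in> W" and "\<exists>y\<in>W. y \<le> x \<and> \<xi>2 y = 1"
  then obtain y where y: "y \<in> W" "y \<le> x" "\<xi>2 y = 1" by blast
  then have "\<xi>1 y = 1" using e by simp
  then have "\<xi>1 x = \<xi>1' x" using h x y unfolding AB_def by blast
  then show "\<xi>2 x = \<xi>2' x" using e x by simp
next
  fix x assume x: "x \<in> W" and "\<xi>2 x \<noteq> -1"
  then have "\<xi>1 x \<noteq> -1" using e by simp
  then have "\<xi>1' x \<noteq> -1" using h x unfolding AB_def by blast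
  then show "\<xi>2' x \<noteq> -1" using e x by simp
qed

lemma rsup_eq: assumes y0: "y0 \<in> I" and e: "\<forall>x\<ge>y0. x \<in> I \<longleftrightarrow> x \<in> J"
  shows "rsup I = rsup J"
  unfolding rsup_def
proof (rule antisym)
  show "(SUP x\<in>I. ereal (real_of_int x)) \<le> (SUP x\<in>J. ereal (real_of_int x))"
  proof (rule SUP_mono)
    fix n assume n: "n \<in> I"
    have "max n y0 \<in> J" using e n y0 by (cases "n \<le> y0") (auto simp: max_def)
    then show "\<exists>m\<in>J. ereal (real_of_int n) \<le> ereal (real_of_int m)" by (intro bexI[of _ "max n y0"]) auto
  qed
  show "(SUP x\<in>J. ereal (real_of_int x)) \<le> (SUP x\<in>I. ereal (real_of_int x))"
  proof (rule SUP_mono)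
    fix n assume n: "n \<in> J"
    have "max n y0 \<in> I" using e n y0 by (cases "n \<le> y0") (auto simp: max_def)
    then show "\<exists>m\<in>I. ereal (real_of_int n) \<le> ereal (real_of_int m)" by (intro bexI[of _ "max n y0"]) auto
  qed
qed

theorem mainTheorem5:
  fixes la mu :: real and G :: graph and \<eta>' :: "int \<Rightarrow> int"
    and \<zeta>O \<zeta>' :: "real \<Rightarrow> int \<Rightarrow> int" and t :: real
  assumes "mu \<ge> la" and "rates_ok la mu G" and "good_graph G"
    and "config \<eta>'" and "\<eta>' 0 = 1" and "\<forall>x\<ge>1. \<eta>' x = -1"
    and "tscp_path G std_init \<zeta>O" and "tscp_path G \<eta>' \<zeta>'"
    and "t \<ge> 0" and "infected (\<zeta>O t) \<noteq> {}"
  shows "rsup (infected (\<zeta>O t)) = rsup (infected (\<zeta>' t))"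
proof -
  note gg = assms(3) and P1 = assms(7) and P2 = assms(8)
  have R: "\<forall>T n. \<exists>x. x \<ge> n \<and> edge_blocked G T x" and L: "\<forall>T n. \<exists>x. x \<le> n \<and> edge_blocked G T x"
    using gg unfolding good_graph_def by blast+
  obtain b where b: "b \<ge> 0" "edge_blocked G t b" using R by blast
  obtain a where a: "a \<le> -1" "edge_blocked G t a" using L by blast
  have i1: "\<zeta>O 0 = std_init" by (rule tp1[OF P1])
  have i2: "\<zeta>' 0 = \<eta>'" by (rule tp1[OF P2])
  have ABt: "AB {a<..b} (\<zeta>O t) (\<zeta>' t)"
  proof (rule window_induct[OF P1 P2, where W="{a<..b}" and T=t and Q="AB {a<..b}"])
    show "finite {a<..b}" by simp
    show "\<And>\<xi>1 \<xi>2 \<xi>1' \<xi>2'. \<forall>x\<in>{a<..b}. \<xi>1 x = \<xi>2 x \<and> \<xi>1' x = \<xi>2' x \<Longrightarrow>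
        AB {a<..b} \<xi>1 \<xi>1' \<Longrightarrow> AB {a<..b} \<xi>2 \<xi>2'" by (rule AB_cong)
    show "AB {a<..b} (\<zeta>O 0) (\<zeta>' 0)" unfolding i1 i2 AB_def
    proof (intro conjI ballI impI)
      fix x assume x: "x \<in> {a<..b}" and "\<exists>y\<in>{a<..b}. y \<le> x \<and> std_init y = 1"
      then have "0 \<le> x" by (auto simp: std_init_def split: if_splits)
      then show "std_init x = \<eta>' x" using assms(5,6) by (cases "x = 0") (auto simp: std_init_def)
    next
      fix x assume "x \<in> {a<..b}" "std_init x \<noteq> -1"
      then have "x = 0" by (auto simp: std_init_def split: if_splits)
      then show "\<eta>' x \<noteq> -1" using assms(5) by simp
    qed
    show "\<And>u \<xi> \<xi>'. 0 < u \<Longrightarrow> u \<le> t \<Longrightarrow> AB {a<..b} \<xi> \<xi>' \<Longrightarrow> config \<xi> \<Longrightarrow> config \<xi>' \<Longrightarrow>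
        AB {a<..b} (\<lambda>x. upd G u x \<xi>) (\<lambda>x. upd G u x \<xi>')"
      by (rule AB_step[OF gg a(2) b(2)]) auto
    show "0 \<le> t" "t \<le> t" using assms(9) by auto
  qed
  have right: "\<zeta>O t x = -1 \<and> \<zeta>' t x = -1" if x: "x > b" for x
  proof -
    obtain b2 where b2: "b2 \<ge> x" "edge_blocked G t b2" using R by blast
    have "\<forall>z\<in>{b<..b2}. \<zeta>O t z = -1 \<and> \<zeta>' t z = -1"
    proof (rule window_induct[OF P1 P2, where W="{b<..b2}" and T=t and
          Q="\<lambda>\<xi> \<xi>'. \<forall>z\<in>{b<..b2}. \<xi> z = -1 \<and> \<xi>' z = -1"])
      show "finite {b<..b2}" by simp
      show "\<And>\<xi>1 \<xi>2 \<xi>1' \<xi>2'. \<forall>x\<in>{b<..b2}. \<xi>1 x = \<xi>2 x \<and> \<xi>1' x = \<xi>2' x \<Longrightarrow>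
        \<forall>z\<in>{b<..b2}. \<xi>1 z = -1 \<and> \<xi>1' z = -1 \<Longrightarrow> \<forall>z\<in>{b<..b2}. \<xi>2 z = -1 \<and> \<xi>2' z = -1"
        by auto
      show "\<forall>z\<in>{b<..b2}. \<zeta>O 0 z = -1 \<and> \<zeta>' 0 z = -1"
        unfolding i1 i2 using b(1) assms(6) by (auto simp: std_init_def)
      show "\<And>u (\<xi>::int\<Rightarrow>int) (\<xi>'::int\<Rightarrow>int). 0 < u \<Longrightarrow> u \<le> t \<Longrightarrow> \<forall>z\<in>{b<..b2}. \<xi> z = -1 \<and> \<xi>' z = -1 \<Longrightarrow> config \<xi> \<Longrightarrow> config \<xi>' \<Longrightarrow>
        \<forall>z\<in>{b<..b2}. upd G u z \<xi> = -1 \<and> upd G u z \<xi>' = -1"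
      proof -
        fix u and \<xi> \<xi>' :: "int \<Rightarrow> int" assume u: "0 < u" "u \<le> t" and h: "\<forall>z\<in>{b<..b2}. \<xi> z = -1 \<and> \<xi>' z = -1"
        have "\<forall>z\<in>{b<..b2}. upd G u z \<xi> = -1"
          by (rule allm1_step[OF b(2) b2(2)]) (use u h in auto)
        moreover have "\<forall>z\<in>{b<..b2}. upd G u z \<xi>' = -1"
          by (rule allm1_step[OF b(2) b2(2)]) (use u h in auto)
        ultimately show "\<forall>z\<in>{b<..b2}. upd G u z \<xi> = -1 \<and> upd G u z \<xi>' = -1" by blast
      qed
      show "0 \<le> t" "t \<le> t" using assms(9) by auto
    qed
    then show ?thesis using x b2 by auto
  qed
  have left: "\<zeta>O t x = -1" if x: "x \<le> a" for x
  proof -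
    obtain a2 where a2: "a2 \<le> x - 1" "edge_blocked G t a2" using L by blast
    have "\<forall>z\<in>{a2<..a}. \<zeta>O t z = -1"
    proof (rule window_induct[OF P1 P1, where W="{a2<..a}" and T=t and
          Q="\<lambda>\<xi> \<xi>'. \<forall>z\<in>{a2<..a}. \<xi> z = -1"])
      show "finite {a2<..a}" by simp
      show "\<And>\<xi>1 \<xi>2 \<xi>1' \<xi>2'. \<forall>x\<in>{a2<..a}. \<xi>1 x = \<xi>2 x \<and> \<xi>1' x = \<xi>2' x \<Longrightarrow>
        \<forall>z\<in>{a2<..a}. \<xi>1 z = -1 \<Longrightarrow> \<forall>z\<in>{a2<..a}. \<xi>2 z = -1"
        by auto
      show "\<forall>z\<in>{a2<..a}. \<zeta>O 0 z = -1"
        unfolding i1 using a(1) by (auto simp: std_init_def)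
      show "\<And>u (\<xi>::int\<Rightarrow>int) (\<xi>'::int\<Rightarrow>int). 0 < u \<Longrightarrow> u \<le> t \<Longrightarrow> \<forall>z\<in>{a2<..a}. \<xi> z = -1 \<Longrightarrow> config \<xi> \<Longrightarrow> config \<xi>' \<Longrightarrow>
        \<forall>z\<in>{a2<..a}. upd G u z \<xi> = -1"
        by (rule allm1_step[OF a2(2) a(2)]) auto
      show "0 \<le> t" "t \<le> t" using assms(9) by auto
    qed
    then show ?thesis using x a2 by auto
  qed
  obtain y0 where y0: "y0 \<in> infected (\<zeta>O t)" using assms(10) by blast
  then have y0': "\<zeta>O t y0 = 1" unfolding infected_def by simp
  have "y0 > a"
  proof (rule ccontr)
    assume "\<not> y0 > a" then have "y0 \<le> a" by simp
    then show False using left[of y0] y0' by simp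
  qed
  moreover have "y0 \<le> b"
  proof (rule ccontr)
    assume "\<not> y0 \<le> b" then have "y0 > b" by simp
    then show False using right[of y0] y0' by simp
  qed
  ultimately have y0W: "y0 \<in> {a<..b}" by simp
  have agree: "\<zeta>O t x = \<zeta>' t x" if "x \<ge> y0" for x
  proof (cases "x \<le> b")
    case True
    then have "x \<in> {a<..b}" using that y0W by simp
    then show ?thesis using ABt y0W y0' that unfolding AB_def by blast
  next
    case False then show ?thesis using right by simp
  qed
  show ?thesis
    by (rule rsup_eq[OF y0]) (use agree in \<open>auto simp: infected_def\<close>)
qed

end
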